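(* Let $a,b\in\mathbb{N}$ with $b\le a$. Then there exist $n,k\in\mathbb{N}$ with $k\le n$ such that for every 2-coloring of the edges of $B_{n,k}$, there exists an induced monochromatic copy of $B_{a,b}$ in $B_{n,k}$; that is, there is a set $V'$ of vertices of $B_{n,k}$ such that the induced subgraph of $B_{n,k}$ on $V'$ is isomorphic to $B_{a,b}$ and all of its edges receive the same color.
   Context: For $n\in\mathbb{N}$, $[n]=\{1,\dots,n\}$, and for a set $X$, $\binom{X}{k}$ denotes the set of $k$-element subsets of $X$. For $k\le n$, $B_{n,k}$ is the bipartite graph with left vertex set $[n]$, right vertex set $\binom{[n]}{k}$, and edge set $\{(x,X)\in[n]\times\binom{[n]}{k} : x\in X\}$. For a graph $H=(V,E)$ and $V'\subseteq V$, the induced subgraph on $V'$ has vertex set $V'$ and edge set consisting of all edges of $H$ with both endpoints in $V'$. A 2-coloring of the edges is a map from the edge set to a 2-element set of colors. *)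

theory Defs
  imports Main
begin

type_synonym bvert = "nat + nat set"

definition ksubsets :: "nat \<Rightarrow> nat \<Rightarrow> nat set set" where
  "ksubsets n k = {X. X \<subseteq> {1..n} \<and> card X = k}"

definition B_verts :: "nat \<Rightarrow> nat \<Rightarrow> bvert set" where
  "B_verts n k = Inl ` {1..n} \<union> Inr ` ksubsets n k"

definition B_edges :: "nat \<Rightarrow> nat \<Rightarrow> bvert set set" where
  "B_edges n k = {{Inl x, Inr X} | x X. x \<in> {1..n} \<and> X \<in> ksubsets n k \<and> x \<in> X}"

definition induced_iso :: "nat \<Rightarrow> nat \<Rightarrow> bvert set \<Rightarrow> nat \<Rightarrow> nat \<Rightarrow> bool" where
  "induced_iso n k V' a b \<longleftrightarrow> V' \<subseteq> B_verts n k \<and>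
     (\<exists>f. bij_betw f V' (B_verts a b) \<and>
          (\<forall>u\<in>V'. \<forall>v\<in>V'. {u, v} \<in> B_edges n k \<longleftrightarrow> {f u, f v} \<in> B_edges a b))"

end

theory Submission imports Defs "HOL-Library.Ramsey" "HOL-Library.Infinite_Set" begin

lemma C_ne:
  fixes K x y d :: nat
  assumes "0 < d" "d \<le> 2*K"
  shows "(2*K+1)*x + d \<noteq> (2*K+1)*y"
proof
  assume h: "(2*K+1)*x + d = (2*K+1)*y"
  show False
  proof (cases "y \<le> x")
    case True
    then have "(2*K+1)*y \<le> (2*K+1)*x" by (intro mult_le_mono2)
    then show False using h assms by simp
  next
    case False
    then have "(2*K+1)*(x+1) \<le> (2*K+1)*y" by (intro mult_le_mono2) simp
    then show False using h assms by (simp add: algebra_simps)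
  qed
qed

lemma C_lt:
  fixes K x y :: nat
  assumes "x < y"
  shows "(2*K+1)*x + (2*K+1) \<le> (2*K+1)*y"
proof -
  have "(2*K+1)*(x+1) \<le> (2*K+1)*y" using assms by (intro mult_le_mono2) simp
  then show ?thesis by (simp add: algebra_simps)
qed

lemma order_iso:
  fixes P J :: "nat set"
  assumes "finite P" "finite J" "card P = card J"
  obtains \<tau> where "bij_betw \<tau> P J" "strict_mono_on P \<tau>"
proof -
  obtain hP where hP: "bij_betw hP {..<card P} P" "strict_mono_on {..<card P} hP"
    using ex_bij_betw_strict_mono_card[OF assms(1)] by blast
  obtain hJ where hJ: "bij_betw hJ {..<card J} J" "strict_mono_on {..<card J} hJ"
    using ex_bij_betw_strict_mono_card[OF assms(2)] by blast
  define \<tau> where "\<tau> = hJ \<circ> inv_into {..<card P} hP"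
  have b1: "bij_betw (inv_into {..<card P} hP) P {..<card P}"
    using hP(1) by (rule bij_betw_inv_into)
  have "bij_betw \<tau> P J" unfolding \<tau>_def
    using bij_betw_trans[OF b1] hJ(1) assms(3) by simp
  moreover have "strict_mono_on P \<tau>"
  proof (rule strict_mono_onI)
    fix r s assume rs: "r \<in> P" "s \<in> P" "r < s"
    define u where "u = inv_into {..<card P} hP r"
    define v where "v = inv_into {..<card P} hP s"
    have u: "u < card P" "hP u = r" using rs b1 hP(1) unfolding u_def
      by (auto simp: bij_betw_def f_inv_into_f inv_into_into)
    have v: "v < card P" "hP v = s" using rs b1 hP(1) unfolding v_def
      by (auto simp: bij_betw_def f_inv_into_f inv_into_into)
    have "u < v"
    proof (rule ccontr)
      assume "\<not> u < v"
      then have "v \<le> u" by simp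
      then have "hP v \<le> hP u" using hP(2) u v
        by (cases "v = u") (auto simp: strict_mono_on_def less_imp_le)
      then show False using u v rs by simp
    qed
    then have "hJ u < hJ v" using hJ(2) u v assms(3) by (auto simp: strict_mono_on_def)
    then show "\<tau> r < \<tau> s" unfolding \<tau>_def u_def v_def by simp
  qed
  ultimately show ?thesis using that by blast
qed

lemma rank_lemma:
  fixes \<phi> :: "nat \<Rightarrow> nat"
  assumes "strict_mono_on {..<k} \<phi>" "i < k"
  shows "card {z \<in> \<phi> ` {..<k}. z < \<phi> i} = i"
proof -
  have "{z \<in> \<phi> ` {..<k}. z < \<phi> i} = \<phi> ` {..<i}"
  proof
    show "{z \<in> \<phi> ` {..<k}. z < \<phi> i} \<subseteq> \<phi> ` {..<i}"
    proof clarify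
      fix j assume j: "j < k" "\<phi> j < \<phi> i"
      have "j < i"
      proof (rule ccontr)
        assume "\<not> j < i"
        then have "i \<le> j" by simp
        then have "\<phi> i \<le> \<phi> j" using assms j
          by (cases "i = j") (auto simp: strict_mono_on_def less_imp_le)
        then show False using j by simp
      qed
      then show "\<phi> j \<in> \<phi> ` {..<i}" by simp
    qed
    show "\<phi> ` {..<i} \<subseteq> {z \<in> \<phi> ` {..<k}. z < \<phi> i}"
      using assms by (auto simp: strict_mono_on_def)
  qed
  moreover have "inj_on \<phi> {..<i}"
    using strict_mono_on_imp_inj_on[OF assms(1)] assms(2)
    by (auto intro: inj_on_subset)
  ultimately show ?thesis by (simp add: card_image)
qed

lemma iota_exists:
  fixes K a :: nat and P J :: "nat set"
  assumes PK: "P \<subseteq> {..<K}" and Ja: "J \<subseteq> {..<a}" and cardPJ: "card P = card J" and Pne: "P \<noteq> {}"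
  shows "\<exists>\<iota>. strict_mono_on {..<K} \<iota> \<and> (\<forall>i<K. \<iota> i < (2*K+1)*a) \<and>
     (\<forall>i<K. \<forall>j. \<iota> i = (2*K+1)*j + K \<longrightarrow> i \<in> P \<and> j \<in> J) \<and>
     (\<forall>j\<in>J. \<exists>i<K. \<iota> i = (2*K+1)*j + K)"
proof -
  define C where "C = (\<lambda>j::nat. (2*K+1)*j + K)"
  have finP: "finite P" using PK finite_subset by blast
  have finJ: "finite J" using Ja finite_subset by blast
  obtain \<tau> where tb: "bij_betw \<tau> P J" and tm: "strict_mono_on P \<tau>"
    using order_iso[OF finP finJ cardPJ] by blast
  have tmono: "\<tau> p \<le> \<tau> q" if "p \<in> P" "q \<in> P" "p \<le> q" for p q
    using tm that by (cases "p = q") (auto simp: strict_mono_on_def less_imp_le)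
  have tJ: "\<tau> p \<in> J" if "p \<in> P" for p using tb that by (auto simp: bij_betw_def)
  have ta: "\<tau> p < a" if "p \<in> P" for p using tJ[OF that] Ja by auto
  define m where "m = Min P"
  have mP: "m \<in> P" using finP Pne m_def by simp
  have mle: "m \<le> p" if "p \<in> P" for p using finP that m_def by simp
  have mK: "m < K" using mP PK by auto
  define M where "M = (\<lambda>i. Max {p \<in> P. p \<le> i})"
  have MP: "M i \<in> P" "M i \<le> i" if "\<exists>p\<in>P. p \<le> i" for i
  proof -
    have "finite {p \<in> P. p \<le> i}" "{p \<in> P. p \<le> i} \<noteq> {}" using finP that by auto
    from Max_in[OF this] show "M i \<in> P" "M i \<le> i" unfolding M_def by auto
  qed
  have Mge: "p \<le> M i" if "p \<in> P" "p \<le> i" for p i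
    unfolding M_def using finP that by (intro Max_ge) auto
  define \<iota> where "\<iota> = (\<lambda>i. if \<exists>p\<in>P. p \<le> i then C (\<tau> (M i)) + (i - M i)
                              else C (\<tau> m) - (m - i))"
  have CK: "K \<le> C j" for j unfolding C_def by simp
  have Clt: "C x + (2*K+1) \<le> C y" if "x < y" for x y
    using C_lt[OF that, of K] unfolding C_def by simp
  have Cinj: "C x = C y \<Longrightarrow> x = y" for x y
  proof -
    assume "C x = C y"
    then have "(2*K+1)*x = (2*K+1)*y" unfolding C_def by linarith
    then show "x = y" by (metis mult_left_cancel add_is_0 one_neq_zero)
  qed
  have Cne: "C x + d \<noteq> C y" if "0 < d" "d \<le> 2*K" for x y d
    using C_ne[OF that, of x y] unfolding C_def by (simp add: algebra_simps)
  have Cbound: "C x + d < (2*K+1)*a" if "x < a" "d \<le> K" for x d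
    using C_lt[OF that(1), of K] that(2) unfolding C_def by simp
  have mono: "strict_mono_on {..<K} \<iota>"
  proof (rule strict_mono_onI)
    fix i i' assume ii: "i \<in> {..<K}" "i' \<in> {..<K}" "i < i'"
    show "\<iota> i < \<iota> i'"
    proof (cases "\<exists>p\<in>P. p \<le> i")
      case True
      then have T': "\<exists>p\<in>P. p \<le> i'" using ii by (meson le_trans less_imp_le)
      have "M i \<le> M i'" using MP[OF True] Mge ii by (meson le_trans less_imp_le)
      show ?thesis
      proof (cases "M i = M i'")
        case True
        have "M i \<le> i" using MP(2)[OF \<open>\<exists>p\<in>P. p \<le> i\<close>] .
        then show ?thesis using \<open>\<exists>p\<in>P. p \<le> i\<close> T' True ii unfolding \<iota>_def by auto
      next
        case False
        then have "M i < M i'" using \<open>M i \<le> M i'\<close> by simp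
        then have "\<tau> (M i) < \<tau> (M i')" using tm MP True T' by (auto simp: strict_mono_on_def)
        then have "C (\<tau> (M i)) + (2*K+1) \<le> C (\<tau> (M i'))" by (rule Clt)
        moreover have "i - M i < K" using ii by auto
        ultimately show ?thesis using True T' unfolding \<iota>_def by auto
      qed
    next
      case False
      then have mi: "i < m" using mP by force
      show ?thesis
      proof (cases "\<exists>p\<in>P. p \<le> i'")
        case T': True
        have "\<tau> m \<le> \<tau> (M i')" using tmono mP MP[OF T'] mle by blast
        then have "(2*K+1) * \<tau> m \<le> (2*K+1) * \<tau> (M i')" by (rule mult_le_mono2)
        then have "C (\<tau> m) \<le> C (\<tau> (M i'))" unfolding C_def by linarith
        moreover have "C (\<tau> m) - (m - i) < C (\<tau> m)" using mi mK CK[of "\<tau> m"] by simp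
        ultimately show ?thesis using False T' unfolding \<iota>_def by auto
      next
        case F': False
        then have "i' < m" using mP by force
        then show ?thesis using False F' mi ii mK CK[of "\<tau> m"] unfolding \<iota>_def by auto
      qed
    qed
  qed
  have bound: "\<iota> i < (2*K+1)*a" if "i < K" for i
  proof (cases "\<exists>p\<in>P. p \<le> i")
    case True
    have "C (\<tau> (M i)) + (i - M i) < (2*K+1)*a"
      using Cbound[OF ta[OF MP(1)[OF True]], of "i - M i"] that by simp
    then show ?thesis using True unfolding \<iota>_def by simp
  next
    case False
    have "C (\<tau> m) + 0 < (2*K+1)*a" using Cbound[OF ta[OF mP], of 0] by simp
    then show ?thesis using False unfolding \<iota>_def by simp
  qed
  have hit: "i \<in> P \<and> j \<in> J" if "i < K" "\<iota> i = C j" for i j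
  proof (cases "\<exists>p\<in>P. p \<le> i")
    case True
    then have e: "C (\<tau> (M i)) + (i - M i) = C j" using that unfolding \<iota>_def by simp
    have "i - M i = 0"
    proof (rule ccontr)
      assume "i - M i \<noteq> 0"
      moreover have "i - M i \<le> 2*K" using that(1) by simp
      ultimately show False using Cne[of "i - M i" "\<tau> (M i)" j] e by simp
    qed
    then have "i = M i" using MP[OF True] by simp
    moreover have "\<tau> (M i) = j" using e \<open>i - M i = 0\<close> Cinj by simp
    ultimately show ?thesis using MP[OF True] tJ by metis
  next
    case False
    then have mi: "i < m" using mP by force
    have "C (\<tau> m) - (m - i) = C j" using False that unfolding \<iota>_def by simp
    then have "C j + (m - i) = C (\<tau> m)" using mi mK CK[of "\<tau> m"] by simp
    moreover have "m - i \<le> 2*K" "0 < m - i" using mi mK by auto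
    ultimately have False using Cne[of "m - i" j "\<tau> m"] by simp
    then show ?thesis ..
  qed
  have surj: "\<exists>i<K. \<iota> i = C j" if jJ: "j \<in> J" for j
  proof -
    obtain p where p: "p \<in> P" "\<tau> p = j" using tb jJ by (auto simp: bij_betw_def)
    have ex: "\<exists>q\<in>P. q \<le> p" using p by auto
    have "M p = p" using MP[OF ex] Mge[OF p(1), of p] by simp
    then have "\<iota> p = C j" using ex p unfolding \<iota>_def by simp
    moreover have "p < K" using p PK by auto
    ultimately show ?thesis by blast
  qed
  show ?thesis
    using mono bound hit surj unfolding C_def by blast
qed

lemma edge_LR: "{Inl x, Inr X} \<in> B_edges n k \<longleftrightarrow> x \<in> {1..n} \<and> X \<in> ksubsets n k \<and> x \<in> X"
  unfolding B_edges_def by (auto simp: doubleton_eq_iff)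

lemma edge_LL: "{Inl x, Inl y} \<notin> B_edges n k"
  unfolding B_edges_def by (auto simp: doubleton_eq_iff)

lemma edge_RR: "{Inr x, Inr y} \<notin> B_edges n k"
  unfolding B_edges_def by (auto simp: doubleton_eq_iff)

lemma edge_form: "E \<in> B_edges n k \<Longrightarrow> \<exists>x X. E = {Inl x, Inr X} \<and> x \<in> {1..n} \<and> X \<in> ksubsets n k \<and> x \<in> X"
  unfolding B_edges_def by blast

lemma B_verts_cases:
  assumes "u \<in> B_verts n k"
  obtains x where "u = Inl x" "x \<in> {1..n}" | X where "u = Inr X" "X \<in> ksubsets n k"
  using assms unfolding B_verts_def by blast

lemma pred_image_nsets:
  assumes "X \<in> ksubsets a b"
  shows "(\<lambda>x. x - 1) ` X \<in> nsets {..<a} b"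
proof -
  have X: "X \<subseteq> {1..a}" "card X = b" using assms by (auto simp: ksubsets_def)
  have "inj_on (\<lambda>x. x - 1) X"
  proof (rule inj_onI)
    fix x y assume "x \<in> X" "y \<in> X" "x - 1 = y - 1"
    moreover have "1 \<le> x" "1 \<le> y" using X(1) \<open>x \<in> X\<close> \<open>y \<in> X\<close> by auto
    ultimately show "x = y" by simp
  qed
  then have "card ((\<lambda>x. x - 1) ` X) = b" using X by (simp add: card_image)
  moreover have "(\<lambda>x. x - 1) ` X \<subseteq> {..<a}"
  proof
    fix y assume "y \<in> (\<lambda>x. x - 1) ` X"
    then obtain x where "x \<in> X" "y = x - 1" by blast
    moreover have "1 \<le> x" "x \<le> a" using X(1) \<open>x \<in> X\<close> by auto
    ultimately show "y \<in> {..<a}" by simp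
  qed
  moreover have "finite ((\<lambda>x. x - 1) ` X)" using X(1) finite_subset by blast
  ultimately show ?thesis by (simp add: nsets_def)
qed

lemma pred_image_mem:
  assumes "X \<in> ksubsets a b" "x \<in> {1..a}"
  shows "x - 1 \<in> (\<lambda>x. x - 1) ` X \<longleftrightarrow> x \<in> X"
proof -
  have X: "X \<subseteq> {1..a}" using assms by (auto simp: ksubsets_def)
  show ?thesis
  proof
    assume "x - 1 \<in> (\<lambda>x. x - 1) ` X"
    then obtain y where y: "y \<in> X" "x - 1 = y - 1" by blast
    have "1 \<le> y" using X y(1) by auto
    moreover have "1 \<le> x" using assms(2) by simp
    ultimately have "x = y" using y(2) by simp
    then show "x \<in> X" using y(1) by simp
  qed auto
qed

lemma pred_image_inj:
  assumes "X \<in> ksubsets a b" "X' \<in> ksubsets a b" "(\<lambda>x. x - 1) ` X = (\<lambda>x. x - 1) ` X'"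
  shows "X = X'"
proof -
  have X: "X \<subseteq> {1..a}" "X' \<subseteq> {1..a}" using assms by (auto simp: ksubsets_def)
  have eq: "x \<in> X \<longleftrightarrow> x \<in> X'" if "x \<in> {1..a}" for x
    using pred_image_mem[OF assms(1) that] pred_image_mem[OF assms(2) that] assms(3) by simp
  show ?thesis
  proof (rule set_eqI)
    fix x show "x \<in> X \<longleftrightarrow> x \<in> X'"
    proof (cases "x \<in> {1..a}")
      case True then show ?thesis using eq by blast
    next
      case False then show ?thesis using X by blast
    qed
  qed
qed

theorem mainTheorem2:
  fixes a b :: nat
  assumes "b \<le> a"
  shows "\<exists>n k. k \<le> n \<and>
           (\<forall>c :: bvert set \<Rightarrow> bool.
              \<exists>V'. induced_iso n k V' a b \<and>
                   (\<exists>col. \<forall>e \<in> B_edges n k. e \<subseteq> V' \<longrightarrow> c e = col))"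
proof (cases "b = 0")
  case True
  have X0: "X = {}" if "X \<in> ksubsets a 0" for X
  proof -
    have X: "X \<subseteq> {1..a}" "card X = 0" using that by (auto simp: ksubsets_def)
    have "finite X" using X(1) finite_subset by blast
    then show ?thesis using X(2) by simp
  qed
  have noedge: "E \<notin> B_edges a 0" for E
  proof
    assume "E \<in> B_edges a 0"
    then obtain x X where "X \<in> ksubsets a 0" "x \<in> X" unfolding B_edges_def by blast
    then show False using X0 by blast
  qed
  have iso: "induced_iso a 0 (B_verts a 0) a 0"
    unfolding induced_iso_def
  proof (intro conjI exI[of _ id])
    show "B_verts a 0 \<subseteq> B_verts a 0" by simp
    show "bij_betw id (B_verts a 0) (B_verts a 0)" by simp
    show "\<forall>u\<in>B_verts a 0. \<forall>v\<in>B_verts a 0. ({u, v} \<in> B_edges a 0) = ({id u, id v} \<in> B_edges a 0)" by simp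
  qed
  have "\<forall>c::bvert set \<Rightarrow> bool. \<exists>V'. induced_iso a 0 V' a b \<and> (\<exists>col. \<forall>e\<in>B_edges a 0. e \<subseteq> V' \<longrightarrow> c e = col)"
    using iso noedge True by blast
  then show ?thesis by (intro exI[of _ a] exI[of _ "0::nat"]) simp
next
  case False
  define k where "k = 2*b"
  define m where "m = (2*k+1)*a"
  define C where "C = (\<lambda>j::nat. (2*k+1)*j + k)"
  define qs where "qs = replicate (2^k) m"
  obtain N :: nat where N: "partn_lst {..<N} qs k" using ramsey_full[of qs k] by blast
  have a1: "1 \<le> a" using False assms by simp
  have "(2*k+1)*1 \<le> (2*k+1)*a" using a1 by (rule mult_le_mono2)
  then have km: "k < m" unfolding m_def by simp
  have Cm: "C j < m" if "j < a" for j
    using C_lt[OF that, of k] unfolding C_def m_def by simp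
  have lenqs: "length qs = 2^k" unfolding qs_def by simp
  have kN: "k \<le> N"
  proof -
    have z: "(\<lambda>_. 0::nat) \<in> nsets {..<N} k \<rightarrow> {..<2^k}" by simp
    obtain i H where "i < length qs" "H \<in> nsets {..<N} (qs!i)" "(\<lambda>_. 0::nat) ` nsets H k \<subseteq> {i}"
      by (rule partn_lstE[OF N z lenqs])
    then have "H \<subseteq> {..<N}" "card H = m" by (auto simp: nsets_def qs_def)
    then have "card H \<le> card {..<N}" by (intro card_mono) simp_all
    then have "m \<le> N" using \<open>card H = m\<close> by simp
    then show ?thesis using km by simp
  qed
  have main: "\<forall>c :: bvert set \<Rightarrow> bool. \<exists>V'. induced_iso N k V' a b \<and> (\<exists>col. \<forall>e\<in>B_edges N k. e \<subseteq> V' \<longrightarrow> c e = col)"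
  proof (intro allI)
    fix c :: "bvert set \<Rightarrow> bool"
    define g where "g = (\<lambda>Y. {i. i < k \<and> (\<exists>y\<in>Y. card {z\<in>Y. z < y} = i \<and> c {Inl (Suc y), Inr (Suc ` Y)})})"
    have gk: "g Y \<in> Pow {..<k}" for Y unfolding g_def by auto
    have finPow: "finite (Pow {..<k})" by simp
    obtain h where h: "bij_betw h (Pow {..<k}) {0..<card (Pow {..<k})}"
      using ex_bij_betw_finite_nat[OF finPow] by blast
    have cardPow: "card (Pow {..<k}) = 2^k" by (simp add: card_Pow)
    have f_in: "(h \<circ> g) \<in> nsets {..<N} k \<rightarrow> {..<2^k}"
      using h gk cardPow by (auto simp: bij_betw_def)
    obtain i H where iH: "i < length qs" "H \<in> nsets {..<N} (qs!i)" "(h \<circ> g) ` nsets H k \<subseteq> {i}"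
      by (rule partn_lstE[OF N f_in lenqs])
    have H: "H \<subseteq> {..<N}" "finite H" "card H = m" using iH by (auto simp: nsets_def qs_def)
    have gconst: "g Y = g Y'" if "Y \<in> nsets H k" "Y' \<in> nsets H k" for Y Y'
    proof -
      have "h (g Y) = h (g Y')" using iH(3) that by auto
      then show ?thesis using h gk by (auto simp: bij_betw_def inj_on_def)
    qed
    obtain e where e: "bij_betw e {..<m} H" "strict_mono_on {..<m} e"
      using ex_bij_betw_strict_mono_card[OF H(2)] H(3) by metis
    have einj: "inj_on e {..<m}" using e(1) by (auto simp: bij_betw_def)
    have eH: "e x \<in> H" if "x < m" for x using e(1) that by (auto simp: bij_betw_def)
    define G where "G = g (e ` {..<k})"
    have Y0: "e ` {..<k} \<in> nsets H k"
    proof -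
      have "inj_on e {..<k}" using einj km by (auto intro: inj_on_subset)
      then show ?thesis using eH km by (auto simp: nsets_def card_image)
    qed
    have gG: "g Y = G" if "Y \<in> nsets H k" for Y using gconst[OF that Y0] G_def by simp
    have GK: "G \<subseteq> {..<k}" using gk G_def by auto
    obtain P col where P: "P \<subseteq> {..<k}" "card P = b" "\<forall>i\<in>P. (i \<in> G) = col"
    proof (cases "b \<le> card G")
      case True
      then obtain T where "T \<subseteq> G" "card T = b" using obtain_subset_with_card_n by metis
      then show ?thesis using that[of T True] GK by auto
    next
      case False
      have "card ({..<k} - G) = k - card G" using GK by (simp add: card_Diff_subset finite_subset)
      then have "b \<le> card ({..<k} - G)" using False k_def by simp
      then obtain T where "T \<subseteq> {..<k} - G" "card T = b" using obtain_subset_with_card_n by metis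
      then show ?thesis using that[of T False] by auto
    qed
    have Pne: "P \<noteq> {}" using P(2) False by auto
    define goodi where "goodi = (\<lambda>J \<iota>. strict_mono_on {..<k} \<iota> \<and> (\<forall>i<k. \<iota> i < m) \<and>
       (\<forall>i<k. \<forall>j. \<iota> i = C j \<longrightarrow> i \<in> P \<and> j \<in> J) \<and> (\<forall>j\<in>J. \<exists>i<k. \<iota> i = C j))"
    define \<iota>f where "\<iota>f = (\<lambda>J. SOME \<iota>. goodi J \<iota>)"
    have \<iota>goodi: "goodi J (\<iota>f J)" if "J \<in> nsets {..<a} b" for J
    proof -
      have "J \<subseteq> {..<a}" "card J = b" using that by (auto simp: nsets_def)
      then have "\<exists>\<iota>. goodi J \<iota>" using iota_exists[OF P(1), of J a] P(2) Pne
        unfolding goodi_def C_def m_def by simp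
      then show ?thesis unfolding \<iota>f_def by (rule someI_ex)
    qed
    define Y where "Y = (\<lambda>J. (e \<circ> \<iota>f J) ` {..<k})"
    have phimono: "strict_mono_on {..<k} (e \<circ> \<iota>f J)" if "J \<in> nsets {..<a} b" for J
    proof (rule strict_mono_onI)
      fix r s assume "r \<in> {..<k}" "s \<in> {..<k}" "r < s"
      then have "\<iota>f J r < \<iota>f J s" "\<iota>f J r < m" "\<iota>f J s < m"
        using \<iota>goodi[OF that] unfolding goodi_def strict_mono_on_def by auto
      then show "(e \<circ> \<iota>f J) r < (e \<circ> \<iota>f J) s" using e(2) by (auto simp: strict_mono_on_def)
    qed
    have YH: "Y J \<in> nsets H k" if "J \<in> nsets {..<a} b" for J
    proof -
      have "inj_on (e \<circ> \<iota>f J) {..<k}" using phimono[OF that] by (rule strict_mono_on_imp_inj_on)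
      moreover have "Y J \<subseteq> H" using \<iota>goodi[OF that] eH unfolding goodi_def Y_def by auto
      moreover have "card (Y J) = k" unfolding Y_def using card_image[OF \<open>inj_on (e \<circ> \<iota>f J) {..<k}\<close>] by simp
      moreover have "finite (Y J)" unfolding Y_def by simp
      ultimately show ?thesis unfolding nsets_def by simp
    qed
    have Ymem: "e (C j) \<in> Y J \<longleftrightarrow> j \<in> J" if JJ: "J \<in> nsets {..<a} b" and jj: "j < a" for J j
    proof
      assume "e (C j) \<in> Y J"
      then obtain i where i: "i < k" "e (C j) = e (\<iota>f J i)" unfolding Y_def by auto
      then have "C j = \<iota>f J i" using einj Cm[OF jj] \<iota>goodi[OF JJ]
        unfolding goodi_def inj_on_def by auto
      then show "j \<in> J" using \<iota>goodi[OF JJ] i unfolding goodi_def by metis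
    next
      assume "j \<in> J"
      then obtain i where "i < k" "\<iota>f J i = C j" using \<iota>goodi[OF JJ] unfolding goodi_def by blast
      then show "e (C j) \<in> Y J" unfolding Y_def by force
    qed
    have Ycol: "c {Inl (Suc (e (C j))), Inr (Suc ` Y J)} = col"
      if J: "J \<in> nsets {..<a} b" and j: "j < a" "e (C j) \<in> Y J" for J j
    proof -
      define \<phi> where "\<phi> = e \<circ> \<iota>f J"
      obtain i where i: "i < k" "e (C j) = \<phi> i" using j(2) unfolding Y_def \<phi>_def by auto
      then have "C j = \<iota>f J i" using einj Cm[OF j(1)] \<iota>goodi[OF J]
        unfolding goodi_def inj_on_def \<phi>_def by auto
      then have iP: "i \<in> P" using \<iota>goodi[OF J] i unfolding goodi_def by metis
      have rank: "card {z \<in> Y J. z < \<phi> r} = r" if "r < k" for r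
        using rank_lemma[OF phimono[OF J] that] unfolding Y_def \<phi>_def by simp
      have gY: "g (Y J) = G" using gG[OF YH[OF J]] .
      have "c {Inl (Suc (\<phi> i)), Inr (Suc ` Y J)} \<longleftrightarrow> i \<in> g (Y J)"
      proof
        assume "c {Inl (Suc (\<phi> i)), Inr (Suc ` Y J)}"
        moreover have "\<phi> i \<in> Y J" using i unfolding Y_def \<phi>_def by auto
        ultimately show "i \<in> g (Y J)" unfolding g_def using rank[OF i(1)] i(1) by blast
      next
        assume "i \<in> g (Y J)"
        then obtain y where y: "y \<in> Y J" "card {z \<in> Y J. z < y} = i" "c {Inl (Suc y), Inr (Suc ` Y J)}"
          unfolding g_def by blast
        then obtain r where r: "r < k" "y = \<phi> r" unfolding Y_def \<phi>_def by auto
        then have "r = i" using rank[OF r(1)] y(2) by simp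
        then show "c {Inl (Suc (\<phi> i)), Inr (Suc ` Y J)}" using y r by simp
      qed
      then show ?thesis using gY P(3) iP i(2) by simp
    qed
    have Yinj: "J = J'" if "J \<in> nsets {..<a} b" "J' \<in> nsets {..<a} b" "Y J = Y J'" for J J'
    proof -
      have "J = {j. j < a \<and> e (C j) \<in> Y J}" using Ymem[OF that(1)] that(1) by (auto simp: nsets_def)
      moreover have "J' = {j. j < a \<and> e (C j) \<in> Y J'}" using Ymem[OF that(2)] that(2) by (auto simp: nsets_def)
      ultimately show ?thesis using that(3) by simp
    qed
    define pr where "pr = (\<lambda>X::nat set. (\<lambda>x. x - 1) ` X)"
    define F where "F = case_sum (\<lambda>x. Inl (Suc (e (C (x - 1))))) (\<lambda>X. Inr (Suc ` Y (pr X)))"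
    have FL: "F (Inl x) = Inl (Suc (e (C (x - 1))))" for x unfolding F_def by simp
    have FR: "F (Inr X) = Inr (Suc ` Y (pr X))" for X unfolding F_def by simp
    have prJ: "pr X \<in> nsets {..<a} b" if "X \<in> ksubsets a b" for X
      unfolding pr_def using pred_image_nsets[OF that] .
    have eCN: "Suc (e (C (x - 1))) \<in> {1..N}" if "x \<in> {1..a}" for x
    proof -
      have "x - 1 < a" using that by auto
      then have "e (C (x - 1)) \<in> H" using eH Cm by blast
      then show ?thesis using H(1) by auto
    qed
    have YN: "Suc ` Y (pr X) \<in> ksubsets N k" if "X \<in> ksubsets a b" for X
    proof -
      have "Y (pr X) \<in> nsets H k" using YH[OF prJ[OF that]] .
      then have "Y (pr X) \<subseteq> {..<N}" "card (Y (pr X)) = k" using H(1) by (auto simp: nsets_def)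
      then show ?thesis unfolding ksubsets_def by (auto simp: card_image)
    qed
    have LR: "{F (Inl x), F (Inr X)} \<in> B_edges N k \<longleftrightarrow> {Inl x, Inr X} \<in> B_edges a b"
      if x: "x \<in> {1..a}" and X: "X \<in> ksubsets a b" for x X
    proof -
      have "{F (Inl x), F (Inr X)} \<in> B_edges N k \<longleftrightarrow> e (C (x - 1)) \<in> Y (pr X)"
        unfolding FL FR edge_LR using eCN[OF x] YN[OF X] by auto
      also have "\<dots> \<longleftrightarrow> x - 1 \<in> pr X" using Ymem[OF prJ[OF X]] x by auto
      also have "\<dots> \<longleftrightarrow> x \<in> X" unfolding pr_def using pred_image_mem[OF X x] .
      also have "\<dots> \<longleftrightarrow> {Inl x, Inr X} \<in> B_edges a b" unfolding edge_LR using x X by auto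
      finally show ?thesis .
    qed
    have V1: "F ` B_verts a b \<subseteq> B_verts N k"
    proof
      fix w assume "w \<in> F ` B_verts a b"
      then obtain u where u: "u \<in> B_verts a b" "w = F u" by blast
      from u(1) show "w \<in> B_verts N k"
      proof (cases rule: B_verts_cases)
        case (1 x) then show ?thesis using u eCN[of x] by (auto simp: FL B_verts_def)
      next
        case (2 X) then show ?thesis using u YN[of X] by (auto simp: FR B_verts_def)
      qed
    qed
    have V2: "inj_on F (B_verts a b)"
    proof (rule inj_onI)
      fix u v assume uv: "u \<in> B_verts a b" "v \<in> B_verts a b" "F u = F v"
      from uv(1) show "u = v"
      proof (cases rule: B_verts_cases)
        case (1 x)
        from uv(2) show ?thesis
        proof (cases rule: B_verts_cases)
          case (1 x')
          then have "e (C (x - 1)) = e (C (x' - 1))" using uv \<open>u = Inl x\<close> FL by simp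
          moreover have "x - 1 < a" "x' - 1 < a" using 1 \<open>x \<in> {1..a}\<close> by auto
          ultimately have "C (x - 1) = C (x' - 1)" using einj Cm unfolding inj_on_def by blast
          then have "(2*k+1)*(x - 1) = (2*k+1)*(x' - 1)" unfolding C_def by linarith
          then have "x - 1 = x' - 1" by (metis mult_left_cancel add_is_0 one_neq_zero)
          then show ?thesis using 1 \<open>x \<in> {1..a}\<close> \<open>u = Inl x\<close> by auto
        next
          case (2 X) then show ?thesis using uv \<open>u = Inl x\<close> FL FR by simp
        qed
      next
        case (2 X)
        from uv(2) show ?thesis
        proof (cases rule: B_verts_cases)
          case (1 x') then show ?thesis using uv \<open>u = Inr X\<close> FL FR by simp
        next
          case (2 X')
          then have "Suc ` Y (pr X) = Suc ` Y (pr X')" using uv \<open>u = Inr X\<close> FR by simp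
          then have "Y (pr X) = Y (pr X')" by (simp add: inj_image_eq_iff)
          then have "pr X = pr X'" using Yinj prJ 2 \<open>X \<in> ksubsets a b\<close> by blast
          then show ?thesis using pred_image_inj 2 \<open>X \<in> ksubsets a b\<close> \<open>u = Inr X\<close> unfolding pr_def by blast
        qed
      qed
    qed
    have V3: "{F u, F v} \<in> B_edges N k \<longleftrightarrow> {u, v} \<in> B_edges a b"
      if uv: "u \<in> B_verts a b" "v \<in> B_verts a b" for u v
    proof -
      from uv(1) show ?thesis
      proof (cases rule: B_verts_cases)
        case (1 x)
        from uv(2) show ?thesis
        proof (cases rule: B_verts_cases)
          case (1 x') then show ?thesis using \<open>u = Inl x\<close> FL edge_LL by simp
        next
          case (2 X) then show ?thesis using \<open>u = Inl x\<close> LR \<open>x \<in> {1..a}\<close> by simp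
        qed
      next
        case (2 X)
        from uv(2) show ?thesis
        proof (cases rule: B_verts_cases)
          case (1 x') then show ?thesis using \<open>u = Inr X\<close> LR \<open>X \<in> ksubsets a b\<close> by (simp add: insert_commute)
        next
          case (2 X') then show ?thesis using \<open>u = Inr X\<close> FR edge_RR by simp
        qed
      qed
    qed
    have V4: "c E = col" if E: "E \<in> B_edges N k" "E \<subseteq> F ` B_verts a b" for E
    proof -
      obtain x X where xX: "E = {Inl x, Inr X}" "x \<in> X" using edge_form[OF E(1)] by blast
      have "Inl x \<in> F ` B_verts a b" using E(2) xX by auto
      then obtain u where u: "u \<in> B_verts a b" "Inl x = F u" by blast
      obtain x0 where x0: "u = Inl x0" "x0 \<in> {1..a}"
        using u(1) by (cases rule: B_verts_cases) (use u(2) FR in auto)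
      have "Inr X \<in> F ` B_verts a b" using E(2) xX by auto
      then obtain v where v: "v \<in> B_verts a b" "Inr X = F v" by blast
      obtain X0 where X0: "v = Inr X0" "X0 \<in> ksubsets a b"
        using v(1) by (cases rule: B_verts_cases) (use v(2) FL in auto)
      have xe: "x = Suc (e (C (x0 - 1)))" using u x0 FL by simp
      have Xe: "X = Suc ` Y (pr X0)" using v X0 FR by simp
      have j: "x0 - 1 < a" using x0 by auto
      have "e (C (x0 - 1)) \<in> Y (pr X0)" using xX(2) xe Xe by auto
      from Ycol[OF prJ[OF X0(2)] j this] show ?thesis using xX xe Xe by simp
    qed
    show "\<exists>V'. induced_iso N k V' a b \<and> (\<exists>col. \<forall>e\<in>B_edges N k. e \<subseteq> V' \<longrightarrow> c e = col)"
    proof (intro exI conjI)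
      have bij: "bij_betw F (B_verts a b) (F ` B_verts a b)" using V2 by (simp add: bij_betw_def)
      show "induced_iso N k (F ` B_verts a b) a b"
        unfolding induced_iso_def
      proof (intro conjI exI[of _ "inv_into (B_verts a b) F"])
        show "F ` B_verts a b \<subseteq> B_verts N k" by (rule V1)
        show "bij_betw (inv_into (B_verts a b) F) (F ` B_verts a b) (B_verts a b)"
          using bij by (rule bij_betw_inv_into)
        show "\<forall>u\<in>F ` B_verts a b. \<forall>v\<in>F ` B_verts a b. ({u, v} \<in> B_edges N k) =
          ({inv_into (B_verts a b) F u, inv_into (B_verts a b) F v} \<in> B_edges a b)"
          using V3 V2 by (auto simp: inv_into_f_f)
      qed
      show "\<forall>e\<in>B_edges N k. e \<subseteq> F ` B_verts a b \<longrightarrow> c e = col" using V4 by blast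
    qed
  qed
  show ?thesis using kN main by blast
qed

end
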